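(* Let $n \geq 2$, $d \geq 1$, $g \geq 0$ be integers satisfying $g < d^2/4n + 1$. Then there are integers $d_0 \geq 1$ and $g_0 \geq 0$ such that $d_0 \equiv d \pmod{2n}$ and $d_0^2-4n(g_0-1)=d^2-4n(g-1)$, and satisfying one of the two following conditions: (a) $g_0 < d_0-n$; (b) $d_0 \leq 2n$ and $d_0-n \leq g_0 < d_0^2/4n + 1$. *)

theory Defs
  imports Complex_Main "HOL-Number_Theory.Cong"
begin

end

theory Submission
  imports Defs
begin

lemma aux:
  fixes n :: int
  assumes "n \<ge> 2"
  shows "\<And>d g. m = nat d \<Longrightarrow> d \<ge> 1 \<Longrightarrow> g \<ge> 0 \<Longrightarrow> 4 * n * (g - 1) < d^2 \<Longrightarrow>
    \<exists>d0 g0 :: int. d0 \<ge> 1 \<and> g0 \<ge> 0 \<and> [d0 = d] (mod (2 * n)) \<and>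
           d0^2 - 4 * n * (g0 - 1) = d^2 - 4 * n * (g - 1) \<and>
           (g0 < d0 - n \<or> (d0 \<le> 2 * n \<and> d0 - n \<le> g0 \<and> 4 * n * (g0 - 1) < d0^2))"
proof (induction m rule: less_induct)
  case (less m)
  fix d g :: int
  assume h: "m = nat d" "d \<ge> 1" "g \<ge> 0" "4 * n * (g - 1) < d^2"
  show "\<exists>d0 g0 :: int. d0 \<ge> 1 \<and> g0 \<ge> 0 \<and> [d0 = d] (mod (2 * n)) \<and>
           d0^2 - 4 * n * (g0 - 1) = d^2 - 4 * n * (g - 1) \<and>
           (g0 < d0 - n \<or> (d0 \<le> 2 * n \<and> d0 - n \<le> g0 \<and> 4 * n * (g0 - 1) < d0^2))"
  proof (cases "g < d - n \<or> d \<le> 2 * n")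
    case True
    then show ?thesis using h by (intro exI[of _ d] exI[of _ g]) auto
  next
    case False
    have e: "(d - 2*n)^2 - 4 * n * ((g - d + n) - 1) = d^2 - 4 * n * (g - 1)"
      by (simp add: power2_eq_square algebra_simps)
    have lt: "nat (d - 2*n) < m" using h False assms by auto
    have "4 * n * ((g - d + n) - 1) < (d - 2*n)^2" using e h by linarith
    then obtain d0 g0 where r: "d0 \<ge> 1 \<and> g0 \<ge> 0 \<and> [d0 = d - 2*n] (mod (2 * n)) \<and>
           d0^2 - 4 * n * (g0 - 1) = (d - 2*n)^2 - 4 * n * ((g - d + n) - 1) \<and>
           (g0 < d0 - n \<or> (d0 \<le> 2 * n \<and> d0 - n \<le> g0 \<and> 4 * n * (g0 - 1) < d0^2))"
      using less.IH[OF lt refl, of "g - d + n"] False assms h by auto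
    have "[d - 2*n = d] (mod (2 * n))"
      by (simp add: cong_iff_dvd_diff)
    then have "[d0 = d] (mod (2 * n))" using r cong_trans by blast
    then show ?thesis using r e by (intro exI[of _ d0] exI[of _ g0]) auto
  qed
qed

theorem lemma3p10:
  fixes n d g :: int
  assumes "n \<ge> 2" and "d \<ge> 1" and "g \<ge> 0"
    and "real_of_int g < (real_of_int d)^2 / (4 * real_of_int n) + 1"
  shows "\<exists>d0 g0 :: int. d0 \<ge> 1 \<and> g0 \<ge> 0 \<and> [d0 = d] (mod (2 * n)) \<and>
           d0^2 - 4 * n * (g0 - 1) = d^2 - 4 * n * (g - 1) \<and>
           (g0 < d0 - n \<or>
            (d0 \<le> 2 * n \<and> d0 - n \<le> g0 \<and>
             real_of_int g0 < (real_of_int d0)^2 / (4 * real_of_int n) + 1))"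
proof -
  have np: "(4 * real_of_int n) > 0" using assms by simp
  have iff: "\<And>a b. real_of_int a < (real_of_int b)^2 / (4 * real_of_int n) + 1 \<longleftrightarrow> 4 * n * (a - 1) < b^2"
  proof -
    fix a b :: int
    have "real_of_int a < (real_of_int b)^2 / (4 * real_of_int n) + 1 \<longleftrightarrow>
          (real_of_int a - 1) * (4 * real_of_int n) < (real_of_int b)^2"
      using np by (simp add: field_simps)
    also have "\<dots> \<longleftrightarrow> real_of_int (4 * n * (a - 1)) < real_of_int (b^2)"
      by (simp add: algebra_simps)
    also have "\<dots> \<longleftrightarrow> 4 * n * (a - 1) < b^2" by (rule of_int_less_iff)
    finally show "real_of_int a < (real_of_int b)^2 / (4 * real_of_int n) + 1 \<longleftrightarrow> 4 * n * (a - 1) < b^2" .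
  qed
  have "4 * n * (g - 1) < d^2" using assms(4) iff by blast
  from aux[OF assms(1) refl assms(2) assms(3) this] show ?thesis unfolding iff .
qed

end
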